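(* Let $x_1,\dots,x_n\in\mathbb{R}^p$, let $u_1,\dots,u_s$ be induced points chosen from $\{x_1,\dots,x_n\}$, let $\epsilon>0$ and $\eta_{1,n}>0$, and let $k_{\eta_{1,n}}(x,x')=\exp(-\|x-x'\|^2/(4\epsilon^2))\mathbf 1_{\{\|x-x'\|<\eta_{1,n}\}}$. Define the two-step graph Laplacian $L=I-(Z\Lambda^{-1}Z^\top)^{1/2}$ and the matrices $\tilde Z,\tilde\Lambda$ as in the context (assuming all normalizing sums are positive). Then $L=I-(\tilde Z\tilde\Lambda^{-1}\tilde Z^\top)^{1/2}$.
   Context: Notation $B_{i\cdot}=\sum_jB_{ij}$, $B_{\cdot j}=\sum_iB_{ij}$. For each $i$, $u_{\tau(i)}$ is the nearest induced point to $x_i$ (i.e. $\|u_{\tau(i)}-x_i\|=\min_j\|u_j-x_i\|$), and $n_j=\#\{i:\tau(i)=j\}$. Two-step objects ($1\le i\le n$, $1\le j\le s$): $A_{ij}=\dfrac{n_jk_{\eta_{1,n}}(x_i,u_j)}{\sum_{q=1}^nk_{\eta_{1,n}}(x_q,u_j)\sum_{q=1}^sn_qk_{\eta_{1,n}}(x_i,u_q)}$, $Z_{ij}=A_{ij}/A_{i\cdot}$, $\Lambda=\mathrm{diag}(Z_{\cdot1},\dots,Z_{\cdot s})$, and the square root is the PSD one. Approximated-point-cloud objects ($1\le i,j\le n$): $\tilde K_{ij}=k_{\eta_{1,n}}(x_i,u_{\tau(j)})$, $\tilde A_{ij}=\tilde K_{ij}/(\tilde K_{i\cdot}\tilde K_{\cdot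 j})$, $\tilde Z_{ij}=\tilde A_{ij}/\tilde A_{i\cdot}$, $\tilde\Lambda=\mathrm{diag}(\tilde Z_{\cdot1},\dots,\tilde Z_{\cdot n})$. *)

theory Defs
  imports "HOL-Analysis.Analysis"
begin

definition kern :: "real \<Rightarrow> real \<Rightarrow> real^'p \<Rightarrow> real^'p \<Rightarrow> real" where
  "kern eps eta x y =
     exp (- ((norm (x - y))\<^sup>2) / (4 * eps\<^sup>2)) * (if norm (x - y) < eta then 1 else 0)"

definition row_sum :: "real^'b^'a \<Rightarrow> 'a \<Rightarrow> real" where
  "row_sum B i = (\<Sum>j\<in>UNIV. B $ i $ j)"

definition col_sum :: "real^'b^'a \<Rightarrow> 'b \<Rightarrow> real" where
  "col_sum B j = (\<Sum>i\<in>UNIV. B $ i $ j)"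

definition row_normalize :: "real^'b^'a \<Rightarrow> real^'b^'a" where
  "row_normalize A = (\<chi> i j. A $ i $ j / row_sum A i)"

definition col_diag :: "real^'b^'a \<Rightarrow> real^'b^'b" where
  "col_diag Z = (\<chi> j k. if j = k then col_sum Z j else 0)"

definition ncount :: "('n::finite \<Rightarrow> 's) \<Rightarrow> 's \<Rightarrow> real" where
  "ncount tau j = real (card {i. tau i = j})"

definition A_two :: "real \<Rightarrow> real \<Rightarrow> ('n::finite \<Rightarrow> real^'p) \<Rightarrow> ('s::finite \<Rightarrow> real^'p)
    \<Rightarrow> ('n \<Rightarrow> 's) \<Rightarrow> real^'s^'n" where
  "A_two eps eta x u tau = (\<chi> i j.
     ncount tau j * kern eps eta (x i) (u j) /
     ((\<Sum>q\<in>UNIV. kern eps eta (x q) (u j)) *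
      (\<Sum>q\<in>UNIV. ncount tau q * kern eps eta (x i) (u q))))"

text \<open>Kernel of the approximated point cloud: tilde K_{ij} = k(x_i, u_{tau(j)}).\<close>
definition K_tilde :: "real \<Rightarrow> real \<Rightarrow> ('n::finite \<Rightarrow> real^'p) \<Rightarrow> ('s \<Rightarrow> real^'p)
    \<Rightarrow> ('n \<Rightarrow> 's) \<Rightarrow> real^'n^'n" where
  "K_tilde eps eta x u tau = (\<chi> i j. kern eps eta (x i) (u (tau j)))"

definition A_tilde :: "real \<Rightarrow> real \<Rightarrow> ('n::finite \<Rightarrow> real^'p) \<Rightarrow> ('s \<Rightarrow> real^'p)
    \<Rightarrow> ('n \<Rightarrow> 's) \<Rightarrow> real^'n^'n" where
  "A_tilde eps eta x u tau =
     (let K = K_tilde eps eta x u tau in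
      \<chi> i j. K $ i $ j / (row_sum K i * col_sum K j))"

definition psd :: "real^'n^'n \<Rightarrow> bool" where
  "psd M \<longleftrightarrow> transpose M = M \<and> (\<forall>v. 0 \<le> v \<bullet> (M *v v))"

definition psd_sqrt :: "real^'n^'n \<Rightarrow> real^'n^'n" where
  "psd_sqrt M = (THE R. psd R \<and> R ** R = M)"

definition L_two :: "real \<Rightarrow> real \<Rightarrow> ('n::finite \<Rightarrow> real^'p) \<Rightarrow> ('s::finite \<Rightarrow> real^'p)
    \<Rightarrow> ('n \<Rightarrow> 's) \<Rightarrow> real^'n^'n" where
  "L_two eps eta x u tau =
     (let Z = row_normalize (A_two eps eta x u tau) in
      mat 1 - psd_sqrt (Z ** matrix_inv (col_diag Z) ** transpose Z))"

end

theory Submission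
  imports Defs
begin

lemma diag_inv:
  fixes d :: "'b::finite \<Rightarrow> real"
  assumes "\<forall>j. d j \<noteq> 0"
  shows "matrix_inv (\<chi> j k. if j = k then d j else 0) = (\<chi> j k. if j = k then 1 / d j else 0)"
proof -
  let ?D = "(\<chi> j k. if j = k then d j else 0) :: real^'b^'b"
  let ?E = "(\<chi> j k. if j = k then 1 / d j else 0) :: real^'b^'b"
  have 1: "?D ** ?E = mat 1"
    using assms by (simp add: matrix_matrix_mult_def mat_def vec_eq_iff if_distrib[of "\<lambda>x. x * _"] cong: if_cong)
  have 2: "?E ** ?D = mat 1"
    using assms by (simp add: matrix_matrix_mult_def mat_def vec_eq_iff if_distrib[of "\<lambda>x. x * _"] cong: if_cong)
  have "?D ** matrix_inv ?D = mat 1 \<and> matrix_inv ?D ** ?D = mat 1"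
    unfolding matrix_inv_def by (rule someI[where x = ?E]) (use 1 2 in blast)
  hence 3: "?D ** matrix_inv ?D = mat 1" by blast
  have "?E = ?E ** (?D ** matrix_inv ?D)" by (simp add: 3)
  also have "\<dots> = (?E ** ?D) ** matrix_inv ?D" by (simp add: matrix_mul_assoc)
  also have "\<dots> = matrix_inv ?D" by (simp add: 2)
  finally show ?thesis by simp
qed

lemma prod_formula:
  fixes Z :: "real^'b::finite^'a::finite"
  assumes "\<forall>j. col_sum Z j \<noteq> 0"
  shows "Z ** matrix_inv (col_diag Z) ** transpose Z = (\<chi> i k. \<Sum>j\<in>UNIV. Z$i$j * Z$k$j / col_sum Z j)"
proof -
  have "matrix_inv (col_diag Z) = (\<chi> j k. if j = k then 1 / col_sum Z j else 0)"
    unfolding col_diag_def using diag_inv[of "col_sum Z"] assms by simp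
  then show ?thesis
    by (simp add: matrix_matrix_mult_def transpose_def vec_eq_iff if_distrib[of "\<lambda>x. _ * x"] sum_distrib_right cong: if_cong)
qed

lemma reindex_tau:
  fixes tau :: "'n::finite \<Rightarrow> 's::finite"
  shows "(\<Sum>l\<in>UNIV. f (tau l)) = (\<Sum>j\<in>UNIV. ncount tau j * f j)"
proof -
  have "(\<Sum>l\<in>UNIV. f (tau l)) = (\<Sum>j\<in>UNIV. \<Sum>l\<in>{l. l \<in> UNIV \<and> tau l = j}. f (tau l))"
    by (rule sum.group[symmetric]) auto
  also have "\<dots> = (\<Sum>j\<in>UNIV. ncount tau j * f j)"
    by (rule sum.cong) (auto simp: ncount_def)
  finally show ?thesis .
qed

theorem lemma1:
  fixes x :: "'n::finite \<Rightarrow> real^'p"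
    and u :: "'s::finite \<Rightarrow> real^'p"
    and tau :: "'n \<Rightarrow> 's"
    and eps eta :: real
  assumes eps_pos: "eps > 0"
    and eta_pos: "eta > 0"
    and u_from_x: "\<forall>j. \<exists>i. u j = x i"
    and u_inj: "inj u"
    and tau_nearest: "\<forall>i. norm (u (tau i) - x i) = Min (range (\<lambda>j. norm (u j - x i)))"
    and pos1: "\<forall>j. (\<Sum>q\<in>UNIV. kern eps eta (x q) (u j)) > 0"
    and pos2: "\<forall>i. (\<Sum>q\<in>UNIV. ncount tau q * kern eps eta (x i) (u q)) > 0"
    and pos3: "\<forall>i. row_sum (A_two eps eta x u tau) i > 0"
    and pos4: "\<forall>j. col_sum (row_normalize (A_two eps eta x u tau)) j > 0"
    and pos5: "\<forall>i. row_sum (K_tilde eps eta x u tau) i > 0"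
    and pos6: "\<forall>j. col_sum (K_tilde eps eta x u tau) j > 0"
    and pos7: "\<forall>i. row_sum (A_tilde eps eta x u tau) i > 0"
    and pos8: "\<forall>j. col_sum (row_normalize (A_tilde eps eta x u tau)) j > 0"
  shows "L_two eps eta x u tau =
    mat 1 - psd_sqrt (row_normalize (A_tilde eps eta x u tau)
                      ** matrix_inv (col_diag (row_normalize (A_tilde eps eta x u tau)))
                      ** transpose (row_normalize (A_tilde eps eta x u tau)))"
proof -
  let ?k = "\<lambda>i j. kern eps eta (x i) (u j)"
  let ?A = "A_two eps eta x u tau"
  let ?At = "A_tilde eps eta x u tau"
  let ?K = "K_tilde eps eta x u tau"
  let ?Z = "row_normalize ?A"
  let ?Zt = "row_normalize ?At"
  let ?nc = "ncount tau"
  have ncpos: "?nc (tau l) > 0" for l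
    unfolding ncount_def by (auto simp: card_gt_0_iff)
  have rK: "row_sum ?K i = (\<Sum>q\<in>UNIV. ?nc q * ?k i q)" for i
    unfolding row_sum_def K_tilde_def by (simp add: reindex_tau[of "\<lambda>j. ?k i j" tau])
  have cK: "col_sum ?K l = (\<Sum>q\<in>UNIV. ?k q (tau l))" for l
    unfolding col_sum_def K_tilde_def by simp
  have At: "?At $ i $ l = ?A $ i $ (tau l) / ?nc (tau l)" for i l
    using ncpos[of l] unfolding A_tilde_def A_two_def Let_def rK cK
    by (simp add: K_tilde_def field_simps mult.commute)
  have A0: "?nc j = 0 \<Longrightarrow> ?A $ i $ j = 0" for i j
    unfolding A_two_def by simp
  have rAt: "row_sum ?At i = row_sum ?A i" for i
  proof -
    have "row_sum ?At i = (\<Sum>l\<in>UNIV. ?A $ i $ (tau l) / ?nc (tau l))"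
      unfolding row_sum_def using At by simp
    also have "\<dots> = (\<Sum>j\<in>UNIV. ?nc j * (?A $ i $ j / ?nc j))"
      by (rule reindex_tau)
    also have "\<dots> = row_sum ?A i"
      unfolding row_sum_def by (rule sum.cong) (auto simp: A0)
    finally show ?thesis .
  qed
  have Zt: "?Zt $ i $ l = ?Z $ i $ (tau l) / ?nc (tau l)" for i l
    unfolding row_normalize_def by (simp add: rAt At)
  have cZt: "col_sum ?Zt l = col_sum ?Z (tau l) / ?nc (tau l)" for l
    unfolding col_sum_def Zt by (simp add: sum_divide_distrib)
  have Z0: "?nc j = 0 \<Longrightarrow> ?Z $ i $ j = 0" for i j
    unfolding row_normalize_def using A0 by simp
  have cZ: "\<forall>j. col_sum ?Z j \<noteq> 0" using pos4 by (metis less_irrefl)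
  have cZt': "\<forall>j. col_sum ?Zt j \<noteq> 0" using pos8 by (metis less_irrefl)
  have M: "?Z ** matrix_inv (col_diag ?Z) ** transpose ?Z
         = ?Zt ** matrix_inv (col_diag ?Zt) ** transpose ?Zt"
  proof -
    have "(\<Sum>j\<in>UNIV. ?Z$i$j * ?Z$k$j / col_sum ?Z j) = (\<Sum>l\<in>UNIV. ?Zt$i$l * ?Zt$k$l / col_sum ?Zt l)" for i k
    proof -
      have "(\<Sum>l\<in>UNIV. ?Zt$i$l * ?Zt$k$l / col_sum ?Zt l)
          = (\<Sum>l\<in>UNIV. (\<lambda>j. ?Z$i$j * ?Z$k$j / col_sum ?Z j / ?nc j) (tau l))"
        apply (rule sum.cong, simp)
        subgoal for l using ncpos[of l] by (simp add: Zt cZt field_simps)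
        done
      also have "\<dots> = (\<Sum>j\<in>UNIV. ?nc j * (?Z$i$j * ?Z$k$j / col_sum ?Z j / ?nc j))"
        by (rule reindex_tau)
      also have "\<dots> = (\<Sum>j\<in>UNIV. ?Z$i$j * ?Z$k$j / col_sum ?Z j)"
        by (rule sum.cong) (auto simp: Z0)
      finally show ?thesis by simp
    qed
    then show ?thesis
      unfolding prod_formula[OF cZ] prod_formula[OF cZt'] by (simp add: vec_eq_iff)
  qed
  show ?thesis unfolding L_two_def Let_def M ..
qed

end
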